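(* Let $N\ge1$, $\underline s=(s_1,\dots,s_N)\in\mathbb{Z}^N$, and complex $z_1,\dots,z_N$ with $|z_1|>1$, $|z_i|\ge1$. (i) Suppose $N\ge2$ and $2\le p\le N$; let $m_1=0$ and $m_2,\dots,m_p\ge0$, $j_1,\dots,j_p\ge0$ be integers. Let $\underline m^{(p)}=(m_1,\dots,m_p,j_p,0,\dots,0)\in\mathbb{N}^N$ if $p<N$ and $\underline m^{(N)}=(m_1,\dots,m_N)$; let $\underline j^{(p)}=(j_1,\dots,j_p,0,\dots,0)\in\mathbb{N}^N$. Let $\underline m'=(m_1,\dots,m_{p-1},j_{p-1},0,\dots,0)\in\mathbb{N}^N$ and $\underline j'=(j_1,\dots,j_{p-1},0,\dots,0)\in\mathbb{N}^N$. Then $$\mathrm{B}_N\!\left[\begin{smallmatrix}\underline s\\ \underline m^{(p)}\\ \underline j^{(p)}\end{smallmatrix}\Big|\underline z\right]=z_p^{j_p}\,\mathrm{B}_N\!\left[\begin{smallmatrix}\underline s\\ \underline m'\\ \underline j'\end{smallmatrix}\Big|\underline z\right]-z_p^{j_p}Q_{N,p}(j_p;z_p,\dots,z_N)\,\mathrm{B}_{p-1}\!\left[\begin{smallmatrix}s_1,\dots,s_{p-1}\\ m_1,\dots,m_{p-1}\\ j_1,\dots,j_{p-1}\end{smallmatrix}\Big|z_1,\dots,z_{p-1}\right]+\varepsilon_p\sum_{k=t_p+1}^{T_p}z_p^{j_p-k}R_{N,p}(k).$$ (ii) For every integer $j_1\ge0$, with modulations $(0,j_1,0,\dots,0)\in\mathbb{N}^N$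 (just $(0)$ if $N=1$) and shifts $(j_1,0,\dots,0)\in\mathbb{N}^N$, $$\mathrm{B}_N\!\left[\begin{smallmatrix}\underline s\\ (0,j_1,0,\dots,0)\\ (j_1,0,\dots,0)\end{smallmatrix}\Big|\underline z\right]=z_1^{j_1}\mathrm{La}_{s_1,\dots,s_N}(1/z_1,\dots,1/z_N)-z_1^{j_1}Q_{N,1}(j_1;z_1,\dots,z_N).$$
   Context: For $r\ge1$, $\underline s\in\mathbb{Z}^r$, $\underline m\in\mathbb{N}^r$ with $m_1=0$, $\underline j\in\mathbb{N}^r$ and complex $w_i$ ($|w_1|>1$, $|w_i|\ge1$): $\mathrm{B}_r\!\left[\begin{smallmatrix}\underline s\\ \underline m\\ \underline j\end{smallmatrix}\Big|\underline w\right]=\sum\frac{w_1^{-k_1}\cdots w_r^{-k_r}}{(k_1+j_1)^{s_1}\cdots(k_r+j_r)^{s_r}}$ over $k_1\ge1$, $1\le k_i\le k_{i-1}+m_i$ ($2\le i\le r$); $\mathrm{B}_0=1$. $\mathrm{La}_{s_1,\dots,s_N}(w_1,\dots,w_N)=\sum_{k_1\ge\cdots\ge k_N\ge1}\frac{w_1^{k_1}\cdots w_N^{k_N}}{k_1^{s_1}\cdots k_N^{s_N}}$. For $1\le p\le N$, $K\ge0$: $Q_{N,p}(K;z_p,\dots,z_N)=\sum_{K\ge k_p\ge\cdots\ge k_N\ge1}\prod_{i=p}^Nz_i^{-k_i}k_i^{-s_i}$ ($0$ if $K=0$), $Q_{N,N+1}=1$. $\varepsilon_{a,b}=1,-1,0$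 according as $a<b$, $a>b$, $a=b$; $\varepsilon_p=\varepsilon_{j_{p-1},j_p+m_p}$, $t_p=\min(j_{p-1},j_p+m_p)$, $T_p=\max(j_{p-1},j_p+m_p)$. For $K\ge0$: $R_{N,p}(K)=\sum\frac{z_1^{-k_1}\cdots z_{p-2}^{-k_{p-2}}(z_{p-1}z_p)^{-k_{p-1}}}{\big(\prod_{i=1}^{p-1}(k_i+j_i)^{s_i}\big)(k_{p-1}+K)^{s_p}}Q_{N,p+1}(k_{p-1}+K;z_{p+1},\dots,z_N)$ over $k_1\ge1$, $1\le k_i\le k_{i-1}+m_i$ ($2\le i\le p-1$); for $p=2$ the factor $z_1^{-k_1}\cdots z_{p-2}^{-k_{p-2}}$ is $1$. *)

theory Defs
  imports "HOL-Analysis.Analysis"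
begin

text \<open>Conventions: tuples are functions on nat, read with 1-based indices
  (\<open>s i\<close>, \<open>z i\<close>, \<open>m i\<close>, \<open>j i\<close> for \<open>i = 1, 2, ...\<close>); values at other indices are irrelevant.
  Summation indices \<open>(k_1,...,k_r)\<close> are lists \<open>k\<close> of length r with \<open>k_i = k!(i-1)\<close>.\<close>

definition Bidx :: "nat \<Rightarrow> (nat \<Rightarrow> nat) \<Rightarrow> nat list set" where
  "Bidx r m = {k. length k = r \<and> (r \<ge> 1 \<longrightarrow> k!0 \<ge> 1) \<and>
      (\<forall>i. 2 \<le> i \<and> i \<le> r \<longrightarrow> 1 \<le> k!(i-1) \<and> k!(i-1) \<le> k!(i-2) + m i)}"

text \<open>\<open>B_r[s; m; j | w]\<close>; the empty product gives \<open>B_0 = 1\<close>.\<close>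
definition B :: "nat \<Rightarrow> (nat \<Rightarrow> int) \<Rightarrow> (nat \<Rightarrow> nat) \<Rightarrow> (nat \<Rightarrow> nat) \<Rightarrow> (nat \<Rightarrow> complex) \<Rightarrow> complex" where
  "B r s m j w = infsum (\<lambda>k. \<Prod>i=1..r. w i powi (- int (k!(i-1)))
        * of_nat (k!(i-1) + j i) powi (- s i)) (Bidx r m)"

definition Laidx :: "nat \<Rightarrow> nat list set" where
  "Laidx N = {k. length k = N \<and> (\<forall>i<N. 1 \<le> k!i) \<and> (\<forall>i. i + 1 < N \<longrightarrow> k!(i+1) \<le> k!i)}"

definition La :: "nat \<Rightarrow> (nat \<Rightarrow> int) \<Rightarrow> (nat \<Rightarrow> complex) \<Rightarrow> complex" where
  "La N s w = infsum (\<lambda>k. \<Prod>i=1..N. w i ^ (k!(i-1)) * of_nat (k!(i-1)) powi (- s i)) (Laidx N)"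

text \<open>\<open>Q_{N,p}(K; z_p,...,z_N)\<close>: finite sum over \<open>K \<ge> k_p \<ge> ... \<ge> k_N \<ge> 1\<close>,
  with \<open>k_i = k!(i-p)\<close>.  For \<open>p = N+1\<close> this is 1, and for \<open>p \<le> N\<close>, \<open>K = 0\<close> it is 0.\<close>
definition Qidx :: "nat \<Rightarrow> nat \<Rightarrow> nat list set" where
  "Qidx n K = {k. length k = n \<and> (\<forall>i<n. 1 \<le> k!i \<and> k!i \<le> K) \<and> (\<forall>i. i + 1 < n \<longrightarrow> k!(i+1) \<le> k!i)}"

definition Q :: "nat \<Rightarrow> nat \<Rightarrow> (nat \<Rightarrow> int) \<Rightarrow> (nat \<Rightarrow> complex) \<Rightarrow> nat \<Rightarrow> complex" where
  "Q N p s z K = (\<Sum>k\<in>Qidx (N + 1 - p) K. \<Prod>i=p..N. z i powi (- int (k!(i-p)))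
        * of_nat (k!(i-p)) powi (- s i))"

definition R :: "nat \<Rightarrow> nat \<Rightarrow> (nat \<Rightarrow> int) \<Rightarrow> (nat \<Rightarrow> nat) \<Rightarrow> (nat \<Rightarrow> nat) \<Rightarrow> (nat \<Rightarrow> complex) \<Rightarrow> nat \<Rightarrow> complex" where
  "R N p s m j z K = infsum (\<lambda>k.
        (\<Prod>i=1..p-2. z i powi (- int (k!(i-1))))
      * (z (p-1) * z p) powi (- int (k!(p-2)))
      * (\<Prod>i=1..p-1. of_nat (k!(i-1) + j i) powi (- s i))
      * of_nat (k!(p-2) + K) powi (- s p)
      * Q N (p+1) s z (k!(p-2) + K)) (Bidx (p-1) m)"

definition eps :: "nat \<Rightarrow> nat \<Rightarrow> int" where
  "eps a b = (if a < b then 1 else if a > b then -1 else 0)"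

end

theory Submission imports Defs "HOL-Real_Asymp.Real_Asymp" begin

definition tm :: "nat \<Rightarrow> (nat \<Rightarrow> int) \<Rightarrow> (nat \<Rightarrow> nat) \<Rightarrow> (nat \<Rightarrow> complex) \<Rightarrow> nat list \<Rightarrow> complex" where
  "tm r s j w k = (\<Prod>i=1..r. w i powi (- int (k!(i-1))) * of_nat (k!(i-1) + j i) powi (- s i))"

lemma B_tm: "B r s m j w = infsum (tm r s j w) (Bidx r m)"
  unfolding B_def tm_def by simp

lemma Bidx_le:
  assumes "k \<in> Bidx r m" "i < r"
  shows "k!i \<le> k!0 + (\<Sum>l\<in>{2..i+1}. m l)"
  using assms(2)
proof (induction i)
  case 0 then show ?case by simp
next
  case (Suc i)
  have "k!(Suc i) \<le> k!i + m (Suc i + 1)"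
    using assms(1) Suc.prems unfolding Bidx_def
    by (auto elim!: allE[of _ "Suc i + 1"])
  also have "\<dots> \<le> k!0 + (\<Sum>l\<in>{2..i+1}. m l) + m (Suc i + 1)"
    using Suc by simp
  also have "\<dots> = k!0 + (\<Sum>l\<in>{2..Suc i+1}. m l)"
    by (simp add: sum.cl_ivl_Suc)
  finally show ?case .
qed

lemma Bidx_le':
  assumes "k \<in> Bidx r m" "i < r"
  shows "k!i \<le> k!0 + (\<Sum>l\<in>{1..r}. m l)"
proof -
  have "(\<Sum>l\<in>{2..i+1}. m l) \<le> (\<Sum>l\<in>{1..r}. m l)"
    by (rule sum_mono2) (use assms in auto)
  then show ?thesis using Bidx_le[OF assms] by linarith
qed

lemma powi_bound:
  fixes y :: nat and b :: real
  assumes "1 \<le> y" "real y \<le> b"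
  shows "real y powi (- s) \<le> b ^ nat \<bar>s\<bar>"
proof (cases "s \<ge> 0")
  case True
  have "real y powi (- s) = inverse (real y ^ nat s)"
    using True by (simp add: power_int_def power_inverse)
  also have "\<dots> \<le> 1" using assms by (simp add: inverse_le_1_iff)
  also have "1 \<le> b ^ nat \<bar>s\<bar>" using assms by simp
  finally show ?thesis .
next
  case False
  have "real y powi (- s) = real y ^ nat (- s)"
    using False by (simp add: power_int_def)
  also have "\<dots> \<le> b ^ nat (- s)" by (rule power_mono) (use assms in auto)
  finally show ?thesis using False by simp
qed

lemma tm_bound:
  assumes k: "k \<in> Bidx r m" and r: "r \<ge> 1"
    and w1: "norm (w 1) > 1" and wi: "\<forall>i. 1 \<le> i \<and> i \<le> r \<longrightarrow> norm (w i) \<ge> 1"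
  shows "norm (tm r s j w k) \<le>
     (real (k!0) + real ((\<Sum>l\<in>{1..r}. m l) + (\<Sum>l\<in>{1..r}. j l))) ^ (\<Sum>i\<in>{1..r}. nat \<bar>s i\<bar>)
       / norm (w 1) ^ (k!0)"
proof -
  define C where "C = real ((\<Sum>l\<in>{1..r}. m l) + (\<Sum>l\<in>{1..r}. j l))"
  define b where "b = real (k!0) + C"
  have "norm (tm r s j w k) = (\<Prod>i=1..r. norm (w i powi (- int (k!(i-1))) * of_nat (k!(i-1) + j i) powi (- s i)))"
    unfolding tm_def by (simp add: prod_norm)
  also have "\<dots> \<le> (\<Prod>i=1..r. (if i = 1 then inverse (norm (w 1) ^ (k!0)) else 1) * b ^ nat \<bar>s i\<bar>)"
  proof (rule prod_mono, safe)
    fix i assume i: "i \<in> {1..r}"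
    have len: "length k = r" using k by (simp add: Bidx_def)
    have ge1: "1 \<le> k!(i-1)"
    proof (cases "i = 1")
      case True then show ?thesis using k r by (simp add: Bidx_def)
    next
      case False then show ?thesis using k i unfolding Bidx_def by auto
    qed
    have jle: "j i \<le> (\<Sum>l\<in>{1..r}. j l)"
      by (rule member_le_sum) (use i in auto)
    have "k!(i-1) \<le> k!0 + (\<Sum>l\<in>{1..r}. m l)"
      by (rule Bidx_le'[OF k]) (use i in auto)
    then have "k!(i-1) + j i \<le> k!0 + ((\<Sum>l\<in>{1..r}. m l) + (\<Sum>l\<in>{1..r}. j l))"
      using jle by linarith
    then have yb: "real (k!(i-1) + j i) \<le> b"
      unfolding b_def C_def by (metis of_nat_add of_nat_mono)
    have A: "norm (of_nat (k!(i-1) + j i) powi (- s i) :: complex) \<le> b ^ nat \<bar>s i\<bar>"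
      using powi_bound[OF _ yb, of "s i"] ge1 by (simp only: norm_power_int norm_of_nat)
    have B: "norm (w i powi (- int (k!(i-1)))) \<le> (if i = 1 then inverse (norm (w 1) ^ (k!0)) else 1)"
    proof -
      have wi1: "norm (w i) \<ge> 1" using wi i by auto
      have "norm (w i powi (- int (k!(i-1)))) = inverse (norm (w i) ^ (k!(i-1)))"
        by (simp add: power_int_minus norm_inverse norm_power)
      also have "\<dots> \<le> (if i = 1 then inverse (norm (w 1) ^ (k!0)) else 1)"
        using wi1 by (auto simp: inverse_le_1_iff one_le_power)
      finally show ?thesis .
    qed
    show "0 \<le> norm (w i powi - int (k ! (i - 1)) * of_nat (k ! (i - 1) + j i) powi - s i)" by simp
    show "norm (w i powi - int (k ! (i - 1)) * of_nat (k ! (i - 1) + j i) powi - s i)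
       \<le> (if i = 1 then inverse (norm (w 1) ^ k ! 0) else 1) * b ^ nat \<bar>s i\<bar>"
      unfolding norm_mult by (rule mult_mono[OF B A]) auto
  qed
  also have "\<dots> = inverse (norm (w 1) ^ (k!0)) * b ^ (\<Sum>i\<in>{1..r}. nat \<bar>s i\<bar>)"
    using r by (simp add: prod.distrib power_sum prod.delta)
  finally show ?thesis unfolding b_def C_def by (simp add: field_simps)
qed

lemma summable_polygeom:
  fixes q A :: real and D :: nat
  assumes "q > 1" "A \<ge> 1"
  shows "summable (\<lambda>n::nat. (real n + A) ^ D / q ^ n)"
proof -
  have O: "(\<lambda>n::nat. (real n + A) powr real D * q powr (- real n)) \<in> O(\<lambda>n. q powr (- real n/2))"
    using assms by real_asymp
  have eq1: "(\<lambda>n::nat. (real n + A) powr real D * q powr (- real n)) = (\<lambda>n. (real n + A) ^ D / q ^ n)"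
    using assms by (auto simp: powr_realpow powr_minus divide_inverse)
  have eq2: "(\<lambda>n::nat. q powr (- real n/2)) = (\<lambda>n. (q powr (-1/2)) ^ n)"
    using assms by (auto simp: powr_realpow[symmetric] powr_powr)
  have "summable (\<lambda>n. norm ((q powr (-1/2)) ^ n))"
    using assms by (auto intro!: summable_geometric simp: powr_less_one norm_power)
  then show ?thesis
    using summable_comparison_test_bigo O unfolding eq1 eq2 by blast
qed

lemma tm_summable:
  assumes r: "r \<ge> 1"
    and w1: "norm (w 1) > 1" and wi: "\<forall>i. 1 \<le> i \<and> i \<le> r \<longrightarrow> norm (w i) \<ge> 1"
  shows "tm r s j w summable_on Bidx r m"
proof -
  define C where "C = (\<Sum>l\<in>{1..r}. m l) + (\<Sum>l\<in>{1..r}. j l)"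
  define D where "D = (\<Sum>i\<in>{1..r}. nat \<bar>s i\<bar>)"
  define q where "q = norm (w 1)"
  define g where "g n = (real n + real C) ^ D / q ^ n" for n :: nat
  define h where "h n = (real n + (real C + 1)) ^ (r + D) / q ^ n" for n :: nat
  have q1: "q > 1" using w1 q_def by simp
  have hs: "summable h" unfolding h_def by (rule summable_polygeom) (use q1 in auto)
  have h0: "0 \<le> h n" for n using q1 unfolding h_def by simp
  have bnd: "norm (tm r s j w k) \<le> g (k!0)" if "k \<in> Bidx r m" for k
    using tm_bound[OF that r w1 wi, of s j] unfolding g_def C_def D_def q_def by simp
  have "(\<lambda>k. norm (tm r s j w k)) summable_on Bidx r m"
  proof (rule nonneg_bdd_above_summable_on)
    show "bdd_above (sum (\<lambda>k. norm (tm r s j w k)) ` {F. F \<subseteq> Bidx r m \<and> finite F})"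
    proof (rule bdd_aboveI2)
      fix F assume F: "F \<in> {F. F \<subseteq> Bidx r m \<and> finite F}"
      then have FB: "F \<subseteq> Bidx r m" and fF: "finite F" by auto
      have "(\<Sum>k\<in>F. norm (tm r s j w k)) \<le> (\<Sum>k\<in>F. g (k!0))"
        by (rule sum_mono) (use bnd FB in auto)
      also have "\<dots> = (\<Sum>n\<in>(\<lambda>k. k!0) ` F. (\<Sum>k\<in>{x. x \<in> F \<and> x!0 = n}. g (k!0)))"
        by (rule sum.image_gen[OF fF, of "\<lambda>k. g (k!0)" "\<lambda>k. k!0"])
      also have "\<dots> \<le> (\<Sum>n\<in>(\<lambda>k. k!0) ` F. h n)"
      proof (rule sum_mono)
        fix n assume "n \<in> (\<lambda>k. k!0) ` F"
        have sub: "{x. x \<in> F \<and> x!0 = n} \<subseteq> {xs. set xs \<subseteq> {0..n+C} \<and> length xs = r}"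
        proof
          fix x assume "x \<in> {x. x \<in> F \<and> x!0 = n}"
          then have x: "x \<in> F" "x!0 = n" by auto
          then have xB: "x \<in> Bidx r m" using FB by auto
          then have len: "length x = r" by (simp add: Bidx_def)
          have "set x \<subseteq> {0..n+C}"
          proof
            fix y assume "y \<in> set x"
            then obtain i where i: "i < length x" "x!i = y" by (auto simp: in_set_conv_nth)
            have "x!i \<le> x!0 + (\<Sum>l\<in>{1..r}. m l)"
              by (rule Bidx_le'[OF xB]) (use i len in auto)
            then show "y \<in> {0..n+C}" using i x unfolding C_def by auto
          qed
          then show "x \<in> {xs. set xs \<subseteq> {0..n+C} \<and> length xs = r}" using len by simp
        qed
        have "card {x. x \<in> F \<and> x!0 = n} \<le> card {xs. set xs \<subseteq> {0..n+C} \<and> length xs = r}"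
          by (rule card_mono[OF finite_lists_length_eq sub]) simp
        also have "\<dots> = (n + C + 1) ^ r" by (simp add: card_lists_length_eq)
        finally have cd: "real (card {x. x \<in> F \<and> x!0 = n}) \<le> (real n + (real C + 1)) ^ r"
          by (metis (mono_tags, lifting) of_nat_1 of_nat_add of_nat_le_iff of_nat_power add.assoc)
        have "(\<Sum>k\<in>{x. x \<in> F \<and> x!0 = n}. g (k!0)) = real (card {x. x \<in> F \<and> x!0 = n}) * g n"
          by simp
        also have "\<dots> \<le> (real n + (real C + 1)) ^ r * g n"
          by (rule mult_right_mono[OF cd]) (use q1 in \<open>simp add: g_def\<close>)
        also have "\<dots> \<le> h n"
        proof -
          have "(real n + real C) ^ D \<le> (real n + (real C + 1)) ^ D"
            by (rule power_mono) auto
          then have "(real n + (real C + 1)) ^ r * (real n + real C) ^ D \<le> (real n + (real C + 1)) ^ (r + D)"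
            by (simp add: power_add mult_left_mono)
          then show ?thesis unfolding g_def h_def using q1
            by (simp add: divide_right_mono)
        qed
        finally show "(\<Sum>k\<in>{x. x \<in> F \<and> x!0 = n}. g (k!0)) \<le> h n" .
      qed
      also have "\<dots> \<le> suminf h"
        by (rule sum_le_suminf[OF hs]) (use fF h0 in auto)
      finally show "(\<Sum>k\<in>F. norm (tm r s j w k)) \<le> suminf h" .
    qed
  qed simp
  then show ?thesis by (rule abs_summable_summable)
qed

lemma Bidx_alt: "k \<in> Bidx r M \<longleftrightarrow> length k = r \<and> (\<forall>i<r. 1 \<le> k!i) \<and> (\<forall>i. i+1 < r \<longrightarrow> k!(i+1) \<le> k!i + M (i+2))"
proof
  assume k: "k \<in> Bidx r M"
  have "1 \<le> k!i" if "i < r" for i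
  proof (cases i)
    case 0 then show ?thesis using k that by (simp add: Bidx_def)
  next
    case (Suc t) then show ?thesis using k that unfolding Bidx_def by (auto elim!: allE[of _ "i+1"])
  qed
  moreover have "k!(i+1) \<le> k!i + M (i+2)" if "i+1 < r" for i
    using k that unfolding Bidx_def by (auto elim!: allE[of _ "i+2"])
  ultimately show "length k = r \<and> (\<forall>i<r. 1 \<le> k!i) \<and> (\<forall>i. i+1 < r \<longrightarrow> k!(i+1) \<le> k!i + M (i+2))"
    using k by (auto simp: Bidx_def)
next
  assume k: "length k = r \<and> (\<forall>i<r. 1 \<le> k!i) \<and> (\<forall>i. i+1 < r \<longrightarrow> k!(i+1) \<le> k!i + M (i+2))"
  show "k \<in> Bidx r M" unfolding Bidx_def
  proof (intro CollectI conjI allI impI)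
    show "length k = r" using k by simp
    show "1 \<le> k!0" if "r \<ge> 1" using k that by auto
    fix i assume i: "2 \<le> i \<and> i \<le> r"
    show "1 \<le> k!(i-1)" using k i by auto
    show "k!(i-1) \<le> k!(i-2) + M i"
    proof -
      have "(i-2)+1 < r" using i by auto
      then have "k!((i-2)+1) \<le> k!(i-2) + M((i-2)+2)" using k by blast
      moreover have "(i-2)+1 = i-1" "(i-2)+2 = i" using i by auto
      ultimately show ?thesis by simp
    qed
  qed
qed

lemma Qidx_alt: "b \<in> Qidx n K \<longleftrightarrow> length b = n \<and> (\<forall>i<n. 1 \<le> b!i) \<and> (n > 0 \<longrightarrow> b!0 \<le> K) \<and> (\<forall>i. i+1 < n \<longrightarrow> b!(i+1) \<le> b!i)"
proof
  assume "b \<in> Qidx n K" then show "length b = n \<and> (\<forall>i<n. 1 \<le> b!i) \<and> (n > 0 \<longrightarrow> b!0 \<le> K) \<and> (\<forall>i. i+1 < n \<longrightarrow> b!(i+1) \<le> b!i)"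
    by (simp add: Qidx_def)
next
  assume b: "length b = n \<and> (\<forall>i<n. 1 \<le> b!i) \<and> (n > 0 \<longrightarrow> b!0 \<le> K) \<and> (\<forall>i. i+1 < n \<longrightarrow> b!(i+1) \<le> b!i)"
  have "b!i \<le> K" if "i < n" for i
    using that
  proof (induction i)
    case 0 then show ?case using b by auto
  next
    case (Suc i) then show ?case using b by (metis Suc_eq_plus1 Suc_lessD le_trans)
  qed
  then show "b \<in> Qidx n K" using b by (simp add: Qidx_def)
qed

lemma Qidx_finite: "finite (Qidx n K)"
proof (rule finite_subset)
  show "Qidx n K \<subseteq> {xs. set xs \<subseteq> {0..K} \<and> length xs = n}"
    by (auto simp: Qidx_def in_set_conv_nth)
qed (simp add: finite_lists_length_eq)

lemma Bidx_split:
  assumes p: "1 \<le> p" "p \<le> N" and M0: "\<forall>i>p+1. M i = 0"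
    and la: "length a = p-1" and lb: "length b = N-p"
  shows "a @ x # b \<in> Bidx N M \<longleftrightarrow> a \<in> Bidx (p-1) M \<and> 1 \<le> x \<and> (p \<ge> 2 \<longrightarrow> x \<le> a!(p-2) + M p)
           \<and> b \<in> Qidx (N-p) (x + M (p+1))"
proof -
  define k where "k = a @ x # b"
  have lk: "length k = N" using la lb p unfolding k_def by simp
  have na: "k!i = a!i" if "i < p-1" for i using that la unfolding k_def by (simp add: nth_append)
  have nx: "k!(p-1) = x" using la unfolding k_def by (simp add: nth_append)
  have nb: "k!(p+i) = b!i" for i
  proof -
    have "p + i - length a = Suc i" "\<not> p + i < length a" using la p by auto
    then show ?thesis unfolding k_def by (simp add: nth_append)
  qed
  have cases3: "i < p-1 \<or> i = p-1 \<or> (\<exists>t. i = p+t)" for i by presburger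
  show ?thesis unfolding k_def[symmetric]
  proof
    assume "k \<in> Bidx N M"
    then have k1: "\<forall>i<N. 1 \<le> k!i" and k2: "\<forall>i. i+1 < N \<longrightarrow> k!(i+1) \<le> k!i + M (i+2)"
      by (auto simp: Bidx_alt)
    have "a \<in> Bidx (p-1) M" unfolding Bidx_alt
    proof (intro conjI allI impI)
      show "length a = p-1" by (rule la)
      fix i
      show "1 \<le> a!i" if "i < p-1" using that k1[rule_format, of i] na[of i] p by auto
      show "a!(i+1) \<le> a!i + M (i+2)" if "i+1 < p-1" using that k2[rule_format, of i] na[of i] na[of "i+1"] p by auto
    qed
    moreover have "1 \<le> x" using k1 nx p by (metis diff_less less_le_trans zero_less_one)
    moreover have "x \<le> a!(p-2) + M p" if "p \<ge> 2"
    proof -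
      have e: "(p-2)+1 = p-1" "(p-2)+2 = p" "p-2 < p-1" using that by auto
      have "(p-2)+1 < N" using that p by auto
      then have "k!((p-2)+1) \<le> k!(p-2) + M((p-2)+2)" using k2 by blast
      then show ?thesis unfolding e(1,2) nx na[OF e(3)] .
    qed
    moreover have "b \<in> Qidx (N-p) (x + M (p+1))" unfolding Qidx_alt
    proof (intro conjI allI impI)
      show "length b = N-p" by (rule lb)
      fix i
      show "1 \<le> b!i" if "i < N-p" using that k1[rule_format, of "p+i"] nb[of i] by auto
      show "b!0 \<le> x + M (p+1)" if "0 < N-p"
        using that k2[rule_format, of "p-1"] nb[of 0] nx p by (simp add: Suc_diff_le)
      show "b!(i+1) \<le> b!i" if "i+1 < N-p"
        using that k2[rule_format, of "p+i"] nb[of i] nb[of "i+1"] M0 by simp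
    qed
    ultimately show "a \<in> Bidx (p-1) M \<and> 1 \<le> x \<and> (p \<ge> 2 \<longrightarrow> x \<le> a!(p-2) + M p) \<and> b \<in> Qidx (N-p) (x + M (p+1))"
      by blast
  next
    assume H: "a \<in> Bidx (p-1) M \<and> 1 \<le> x \<and> (p \<ge> 2 \<longrightarrow> x \<le> a!(p-2) + M p) \<and> b \<in> Qidx (N-p) (x + M (p+1))"
    then have a1: "\<forall>i<p-1. 1 \<le> a!i" and a2: "\<forall>i. i+1 < p-1 \<longrightarrow> a!(i+1) \<le> a!i + M (i+2)"
      and x1: "1 \<le> x" and x2: "p \<ge> 2 \<longrightarrow> x \<le> a!(p-2) + M p"
      and b1: "\<forall>i<N-p. 1 \<le> b!i" and b2: "0 < N-p \<longrightarrow> b!0 \<le> x + M (p+1)"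
      and b3: "\<forall>i. i+1 < N-p \<longrightarrow> b!(i+1) \<le> b!i"
      by (auto simp: Bidx_alt Qidx_alt)
    show "k \<in> Bidx N M" unfolding Bidx_alt
    proof (intro conjI allI impI)
      show "length k = N" by (rule lk)
      fix i
      show "1 \<le> k!i" if "i < N"
        using cases3[of i]
      proof (elim disjE exE)
        assume "i < p-1" then show ?thesis using a1 na by auto
      next
        assume "i = p-1" then show ?thesis using x1 nx by auto
      next
        fix t assume "i = p+t" then show ?thesis using b1 nb that by auto
      qed
      show "k!(i+1) \<le> k!i + M (i+2)" if "i+1 < N"
        using cases3[of i]
      proof (elim disjE exE)
        assume i: "i < p-1"
        show ?thesis
        proof (cases "i+1 < p-1")
          case True then show ?thesis using a2 na[of i] na[of "i+1"] i by auto
        next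
          case False then have "i+1 = p-1" "p \<ge> 2" using i by auto
          then have e: "i + 1 = p - 1" "i = p-2" "i+2 = p" by auto
          show ?thesis unfolding e(1,3) nx using x2 na[of i] i e(2) \<open>p \<ge> 2\<close> by simp
        qed
      next
        assume i: "i = p-1"
        then have "i+1 = p+0" "0 < N-p" using p that by auto
        then show ?thesis using b2 nb[of 0] nx i p by simp
      next
        fix t assume i: "i = p+t"
        then have "t+1 < N-p" using that by auto
        then show ?thesis using b3 nb[of t] nb[of "t+1"] i M0 by simp
      qed
    qed
  qed
qed

definition Xs :: "nat \<Rightarrow> (nat \<Rightarrow> nat) \<Rightarrow> nat list \<Rightarrow> nat set" where
  "Xs p M a = {x. 1 \<le> x \<and> (p \<ge> 2 \<longrightarrow> x \<le> a!(p-2) + M p)}"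

definition Tset :: "nat \<Rightarrow> nat \<Rightarrow> (nat \<Rightarrow> nat) \<Rightarrow> ((nat list \<times> nat) \<times> nat list) set" where
  "Tset N p M = Sigma (Sigma (Bidx (p-1) M) (Xs p M)) (\<lambda>(a,x). Qidx (N-p) (x + M (p+1)))"

definition gl :: "(nat list \<times> nat) \<times> nat list \<Rightarrow> nat list" where
  "gl = (\<lambda>((a,x),b). a @ x # b)"

lemma Bidx_image:
  assumes p: "1 \<le> p" "p \<le> N" and M0: "\<forall>i>p+1. M i = 0"
  shows "Bidx N M = gl ` Tset N p M" and "inj_on gl (Tset N p M)"
proof -
  show "Bidx N M = gl ` Tset N p M"
  proof
    show "Bidx N M \<subseteq> gl ` Tset N p M"
    proof
      fix k assume k: "k \<in> Bidx N M"
      then have lk: "length k = N" by (simp add: Bidx_def)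
      define a where "a = take (p-1) k"
      define x where "x = k!(p-1)"
      define b where "b = drop p k"
      have kk: "k = a @ x # b"
        unfolding a_def x_def b_def using id_take_nth_drop[of "p-1" k] lk p by simp
      have la: "length a = p-1" and lb: "length b = N-p" using lk p unfolding a_def b_def by auto
      have "a \<in> Bidx (p-1) M \<and> 1 \<le> x \<and> (p \<ge> 2 \<longrightarrow> x \<le> a!(p-2) + M p) \<and> b \<in> Qidx (N-p) (x + M (p+1))"
        using Bidx_split[OF p M0 la lb, of x] k kk by simp
      then have "((a,x),b) \<in> Tset N p M" by (simp add: Tset_def Xs_def)
      then show "k \<in> gl ` Tset N p M" unfolding kk gl_def by force
    qed
  next
    show "gl ` Tset N p M \<subseteq> Bidx N M"
    proof
      fix k assume "k \<in> gl ` Tset N p M"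
      then obtain a x b where T: "((a,x),b) \<in> Tset N p M" and kk: "k = a @ x # b"
        by (auto simp: gl_def)
      then have H: "a \<in> Bidx (p-1) M \<and> 1 \<le> x \<and> (p \<ge> 2 \<longrightarrow> x \<le> a!(p-2) + M p) \<and> b \<in> Qidx (N-p) (x + M (p+1))"
        by (simp add: Tset_def Xs_def)
      then have la: "length a = p-1" and lb: "length b = N-p" by (auto simp: Bidx_def Qidx_def)
      show "k \<in> Bidx N M" using Bidx_split[OF p M0 la lb, of x] H kk by simp
    qed
  qed
  show "inj_on gl (Tset N p M)"
  proof (rule inj_onI)
    fix u v assume u: "u \<in> Tset N p M" and v: "v \<in> Tset N p M" and e: "gl u = gl v"
    obtain a x b where uu: "u = ((a,x),b)" by (metis prod.collapse)
    obtain a' x' b' where vv: "v = ((a',x'),b')" by (metis prod.collapse)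
    have "length a = p-1" "length a' = p-1" using u v uu vv by (auto simp: Tset_def Bidx_def)
    then show "u = v" using e uu vv by (auto simp: gl_def append_eq_append_conv)
  qed
qed

lemma tm_split:
  assumes p: "1 \<le> p" "p \<le> N" and J0: "\<forall>i>p. J i = 0"
    and la: "length a = p-1" and lb: "length b = N-p"
  shows "tm N s J z (a @ x # b) = tm (p-1) s J z a * (z p powi (- int x) * of_nat (x + J p) powi (- s p))
     * (\<Prod>i=p+1..N. z i powi (- int (b!(i-(p+1)))) * of_nat (b!(i-(p+1))) powi (- s i))"
proof -
  define f where "f i = z i powi (- int ((a @ x # b)!(i-1))) * of_nat ((a @ x # b)!(i-1) + J i) powi (- s i)" for i
  have "tm N s J z (a @ x # b) = prod f {1..(p-1) + (N-(p-1))}"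
    unfolding tm_def f_def using p by simp
  also have "\<dots> = prod f {1..p-1} * prod f {p-1+1..p-1+(N-(p-1))}"
    by (rule prod.ub_add_nat) simp
  also have "{p-1+1..p-1+(N-(p-1))} = {p..N}" using p by auto
  also have "prod f {p..N} = f p * prod f {Suc p..N}"
    by (rule prod.atLeast_Suc_atMost) (use p in simp)
  also have "prod f {1..p-1} = tm (p-1) s J z a"
    unfolding tm_def f_def by (rule prod.cong) (auto simp: nth_append la)
  also have "f p = z p powi (- int x) * of_nat (x + J p) powi (- s p)"
    unfolding f_def using la p by (simp add: nth_append)
  also have "prod f {Suc p..N} = (\<Prod>i=p+1..N. z i powi (- int (b!(i-(p+1)))) * of_nat (b!(i-(p+1))) powi (- s i))"
  proof (rule prod.cong)
    fix i assume i: "i \<in> {p+1..N}"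
    have "(a @ x # b)!(i-1) = b!(i-(p+1))"
    proof -
      have "i - 1 - length a = Suc (i-(p+1))" "\<not> i - 1 < length a" using la p i by auto
      then show ?thesis by (simp add: nth_append)
    qed
    then show "f i = z i powi (- int (b!(i-(p+1)))) * of_nat (b!(i-(p+1))) powi (- s i)"
      unfolding f_def using J0 i by simp
  qed simp
  finally show ?thesis by (simp add: mult.assoc)
qed

definition Fd :: "nat \<Rightarrow> nat \<Rightarrow> (nat \<Rightarrow> int) \<Rightarrow> (nat \<Rightarrow> nat) \<Rightarrow> (nat \<Rightarrow> nat) \<Rightarrow> (nat \<Rightarrow> complex) \<Rightarrow> nat list \<times> nat \<Rightarrow> complex" where
  "Fd N p s M J z = (\<lambda>(a,x). tm (p-1) s J z a * (z p powi (- int x) * of_nat (x + J p) powi (- s p))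
       * Q N (p+1) s z (x + M (p+1)))"

lemma B_decomp:
  assumes p: "1 \<le> p" "p \<le> N" and M0: "\<forall>i>p+1. M i = 0" and J0: "\<forall>i>p. J i = 0"
    and z1: "norm (z 1) > 1" and zi: "\<forall>i. 1 \<le> i \<and> i \<le> N \<longrightarrow> norm (z i) \<ge> 1"
  shows "Fd N p s M J z summable_on Sigma (Bidx (p-1) M) (Xs p M)"
    and "B N s M J z = infsum (Fd N p s M J z) (Sigma (Bidx (p-1) M) (Xs p M))"
proof -
  have S: "tm N s J z summable_on Bidx N M"
    by (rule tm_summable) (use p z1 zi in auto)
  note img = Bidx_image[OF p M0]
  have S2: "(tm N s J z \<circ> gl) summable_on Tset N p M"
    using S img(1) summable_on_reindex[OF img(2)] by metis
  define f where "f ax b = tm N s J z (gl (ax, b))" for ax b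
  have eqf: "(tm N s J z \<circ> gl) = (\<lambda>(ax,b). f ax b)" by (auto simp: f_def)
  have TS: "Tset N p M = Sigma (Sigma (Bidx (p-1) M) (Xs p M)) (\<lambda>(a,x). Qidx (N-p) (x + M (p+1)))"
    by (simp add: Tset_def)
  have S3: "(\<lambda>(ax,b). f ax b) summable_on Sigma (Sigma (Bidx (p-1) M) (Xs p M)) (\<lambda>(a,x). Qidx (N-p) (x + M (p+1)))"
    using S2 unfolding eqf TS .
  have inner: "infsum (f ax) ((\<lambda>(a,x). Qidx (N-p) (x + M (p+1))) ax) = Fd N p s M J z ax"
    if ax: "ax \<in> Sigma (Bidx (p-1) M) (Xs p M)" for ax
  proof -
    obtain a x where axe: "ax = (a,x)" by (metis prod.collapse)
    have la: "length a = p-1" using ax axe by (auto simp: Bidx_def)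
    have "infsum (f ax) ((\<lambda>(a,x). Qidx (N-p) (x + M (p+1))) ax)
        = (\<Sum>b\<in>Qidx (N-p) (x + M (p+1)). tm N s J z (a @ x # b))"
      unfolding axe f_def gl_def by (simp add: Qidx_finite)
    also have "\<dots> = (\<Sum>b\<in>Qidx (N-p) (x + M (p+1)). tm (p-1) s J z a * (z p powi (- int x) * of_nat (x + J p) powi (- s p))
     * (\<Prod>i=p+1..N. z i powi (- int (b!(i-(p+1)))) * of_nat (b!(i-(p+1))) powi (- s i)))"
    proof (rule sum.cong)
      fix b assume "b \<in> Qidx (N-p) (x + M (p+1))"
      then have lb: "length b = N-p" by (simp add: Qidx_def)
      show "tm N s J z (a @ x # b) = tm (p-1) s J z a * (z p powi (- int x) * of_nat (x + J p) powi (- s p))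
     * (\<Prod>i=p+1..N. z i powi (- int (b!(i-(p+1)))) * of_nat (b!(i-(p+1))) powi (- s i))"
        by (rule tm_split[OF p J0 la lb])
    qed simp
    also have "\<dots> = Fd N p s M J z ax"
      unfolding axe Fd_def Q_def by (simp add: sum_distrib_left)
    finally show ?thesis .
  qed
  have "B N s M J z = infsum (tm N s J z \<circ> gl) (Tset N p M)"
    unfolding B_tm img(1) by (rule infsum_reindex[OF img(2)])
  also have "\<dots> = infsum (\<lambda>ax. infsum (f ax) ((\<lambda>(a,x). Qidx (N-p) (x + M (p+1))) ax)) (Sigma (Bidx (p-1) M) (Xs p M))"
    unfolding eqf TS by (rule infsum_Sigma'_banach[OF S3, symmetric])
  also have "\<dots> = infsum (Fd N p s M J z) (Sigma (Bidx (p-1) M) (Xs p M))"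
    by (rule infsum_cong) (rule inner)
  finally show "B N s M J z = infsum (Fd N p s M J z) (Sigma (Bidx (p-1) M) (Xs p M))" .
  have "(\<lambda>ax. infsum (f ax) ((\<lambda>(a,x). Qidx (N-p) (x + M (p+1))) ax)) summable_on (Sigma (Bidx (p-1) M) (Xs p M))"
    by (rule summable_on_Sigma_banach[OF S3])
  then show "Fd N p s M J z summable_on Sigma (Bidx (p-1) M) (Xs p M)"
    by (rule summable_on_cong[THEN iffD1, rotated]) (rule inner)
qed

lemma Bidx0: "Bidx 0 M = {[]}"
  by (auto simp: Bidx_def)

lemma B_decomp1:
  assumes N: "1 \<le> N" and M0: "\<forall>i>2. M i = 0" and J0: "\<forall>i>1. J i = 0"
    and z1: "norm (z 1) > 1" and zi: "\<forall>i. 1 \<le> i \<and> i \<le> N \<longrightarrow> norm (z i) \<ge> 1"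
  shows "(\<lambda>x. z 1 powi (- int x) * of_nat (x + J 1) powi (- s 1) * Q N 2 s z (x + M 2)) summable_on {1..}"
    and "B N s M J z = infsum (\<lambda>x. z 1 powi (- int x) * of_nat (x + J 1) powi (- s 1) * Q N 2 s z (x + M 2)) {1..}"
proof -
  have M0': "\<forall>i>1+1. M i = 0" using M0 by simp
  note D = B_decomp[OF order.refl N M0' J0 z1 zi, of s]
  have Sig: "Sigma (Bidx (1-1) M) (Xs 1 M) = (\<lambda>x. ([],x)) ` {1..}"
    by (auto simp: Bidx0 Xs_def)
  have inj: "inj_on (\<lambda>x. ([]::nat list,x)) {1..}" by (auto simp: inj_on_def)
  have eq: "(Fd N 1 s M J z \<circ> (\<lambda>x. ([],x))) = (\<lambda>x. z 1 powi (- int x) * of_nat (x + J 1) powi (- s 1) * Q N 2 s z (x + M 2))"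
    by (auto simp: Fd_def tm_def numeral_2_eq_2)
  show "(\<lambda>x. z 1 powi (- int x) * of_nat (x + J 1) powi (- s 1) * Q N 2 s z (x + M 2)) summable_on {1..}"
    using D(1) unfolding Sig summable_on_reindex[OF inj] eq .
  show "B N s M J z = infsum (\<lambda>x. z 1 powi (- int x) * of_nat (x + J 1) powi (- s 1) * Q N 2 s z (x + M 2)) {1..}"
    using D(2) unfolding Sig infsum_reindex[OF inj] eq .
qed

lemma B_decomp2:
  assumes p: "2 \<le> p" "p \<le> N" and M0: "\<forall>i>p+1. M i = 0" and J0: "\<forall>i>p. J i = 0"
    and z1: "norm (z 1) > 1" and zi: "\<forall>i. 1 \<le> i \<and> i \<le> N \<longrightarrow> norm (z i) \<ge> 1"
  shows "(\<lambda>a. tm (p-1) s J z a * (\<Sum>x=1..a!(p-2) + M p. z p powi (- int x) * of_nat (x + J p) powi (- s p) * Q N (p+1) s z (x + M (p+1)))) summable_on Bidx (p-1) M"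
    and "B N s M J z = infsum (\<lambda>a. tm (p-1) s J z a * (\<Sum>x=1..a!(p-2) + M p. z p powi (- int x) * of_nat (x + J p) powi (- s p) * Q N (p+1) s z (x + M (p+1)))) (Bidx (p-1) M)"
proof -
  have p1: "1 \<le> p" using p by simp
  note D = B_decomp[OF p1 p(2) M0 J0 z1 zi, of s]
  define f where "f a x = Fd N p s M J z (a,x)" for a x
  have eqf: "Fd N p s M J z = (\<lambda>(a,x). f a x)" by (auto simp: f_def)
  have inner: "infsum (f a) (Xs p M a) = tm (p-1) s J z a * (\<Sum>x=1..a!(p-2) + M p. z p powi (- int x) * of_nat (x + J p) powi (- s p) * Q N (p+1) s z (x + M (p+1)))" for a
  proof -
    have "Xs p M a = {1..a!(p-2) + M p}" using p by (auto simp: Xs_def)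
    then show ?thesis by (simp add: f_def Fd_def sum_distrib_left mult.assoc)
  qed
  show "(\<lambda>a. tm (p-1) s J z a * (\<Sum>x=1..a!(p-2) + M p. z p powi (- int x) * of_nat (x + J p) powi (- s p) * Q N (p+1) s z (x + M (p+1)))) summable_on Bidx (p-1) M"
    using summable_on_Sigma_banach[of f "Bidx (p-1) M" "Xs p M"] D(1) unfolding eqf inner by blast
  show "B N s M J z = infsum (\<lambda>a. tm (p-1) s J z a * (\<Sum>x=1..a!(p-2) + M p. z p powi (- int x) * of_nat (x + J p) powi (- s p) * Q N (p+1) s z (x + M (p+1)))) (Bidx (p-1) M)"
    using infsum_Sigma'_banach[of f "Bidx (p-1) M" "Xs p M"] D unfolding eqf inner by simp
qed

lemma Qidx_Cons: "x # b \<in> Qidx (Suc n) K \<longleftrightarrow> 1 \<le> x \<and> x \<le> K \<and> b \<in> Qidx n x"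
proof
  assume H: "x # b \<in> Qidx (Suc n) K"
  then have h1: "\<forall>i<Suc n. 1 \<le> (x#b)!i" and h2: "(x#b)!0 \<le> K"
    and h3: "\<forall>i. i+1 < Suc n \<longrightarrow> (x#b)!(i+1) \<le> (x#b)!i" and lb: "length b = n"
    unfolding Qidx_alt by auto
  have "1 \<le> x" using h1 by auto
  moreover have "x \<le> K" using h2 by simp
  moreover have "b \<in> Qidx n x" unfolding Qidx_alt
  proof (intro conjI allI impI)
    show "length b = n" by (rule lb)
    fix i
    show "1 \<le> b!i" if "i < n" using h1[rule_format, of "Suc i"] that by simp
    show "b!0 \<le> x" if "0 < n" using h3[rule_format, of 0] that by simp
    show "b!(i+1) \<le> b!i" if "i+1 < n" using h3[rule_format, of "Suc i"] that by simp
  qed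
  ultimately show "1 \<le> x \<and> x \<le> K \<and> b \<in> Qidx n x" by blast
next
  assume H: "1 \<le> x \<and> x \<le> K \<and> b \<in> Qidx n x"
  then have b1: "\<forall>i<n. 1 \<le> b!i" and b2: "0 < n \<longrightarrow> b!0 \<le> x"
    and b3: "\<forall>i. i+1 < n \<longrightarrow> b!(i+1) \<le> b!i" and lb: "length b = n"
    unfolding Qidx_alt by auto
  show "x # b \<in> Qidx (Suc n) K" unfolding Qidx_alt
  proof (intro conjI allI impI)
    show "length (x#b) = Suc n" using lb by simp
    fix i
    show "1 \<le> (x#b)!i" if "i < Suc n" using that H b1 by (cases i) auto
    show "(x#b)!0 \<le> K" using H by simp
    show "(x#b)!(i+1) \<le> (x#b)!i" if "i+1 < Suc n" using that b2 b3 by (cases i) auto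
  qed
qed

lemma Qidx_image: "Qidx (Suc n) K = (\<lambda>(x,b). x # b) ` Sigma {1..K} (\<lambda>x. Qidx n x)"
proof
  show "Qidx (Suc n) K \<subseteq> (\<lambda>(x,b). x # b) ` Sigma {1..K} (\<lambda>x. Qidx n x)"
  proof
    fix k assume k: "k \<in> Qidx (Suc n) K"
    then obtain x b where kk: "k = x # b" by (cases k) (auto simp: Qidx_def)
    then show "k \<in> (\<lambda>(x,b). x # b) ` Sigma {1..K} (\<lambda>x. Qidx n x)"
      using k Qidx_Cons[of x b n K] by force
  qed
  show "(\<lambda>(x,b). x # b) ` Sigma {1..K} (\<lambda>x. Qidx n x) \<subseteq> Qidx (Suc n) K"
    using Qidx_Cons by auto
qed

lemma Q_rec:
  assumes p: "1 \<le> p" "p \<le> N"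
  shows "Q N p s z K = (\<Sum>x=1..K. z p powi (- int x) * of_nat x powi (- s p) * Q N (p+1) s z x)"
proof -
  define h where "h k = (\<Prod>i=p..N. z i powi (- int (k!(i-p))) * of_nat (k!(i-p)) powi (- s i))" for k
  have NN: "N + 1 - p = Suc (N - p)" using p by simp
  have inj: "inj_on (\<lambda>(x,b). x # b) (Sigma {1..K} (\<lambda>x. Qidx (N-p) x))"
    by (auto simp: inj_on_def)
  have "Q N p s z K = sum h (Qidx (Suc (N-p)) K)" unfolding Q_def h_def NN ..
  also have "\<dots> = sum (h \<circ> (\<lambda>(x,b). x # b)) (Sigma {1..K} (\<lambda>x. Qidx (N-p) x))"
    unfolding Qidx_image by (rule sum.reindex[OF inj])
  also have "\<dots> = (\<Sum>x=1..K. \<Sum>b\<in>Qidx (N-p) x. h (x # b))"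
  proof -
    have "(h \<circ> (\<lambda>(x,b). x # b)) = (\<lambda>(x,b). h (x # b))" by auto
    then show ?thesis by (simp add: sum.Sigma Qidx_finite)
  qed
  also have "\<dots> = (\<Sum>x=1..K. z p powi (- int x) * of_nat x powi (- s p) * Q N (p+1) s z x)"
  proof (rule sum.cong[OF refl])
    fix x
    have "h (x # b) = z p powi (- int x) * of_nat x powi (- s p) *
        (\<Prod>i=p+1..N. z i powi (- int (b!(i-(p+1)))) * of_nat (b!(i-(p+1))) powi (- s i))" for b
    proof -
      have "h (x # b) = z p powi (- int x) * of_nat x powi (- s p) *
         (\<Prod>i=Suc p..N. z i powi (- int ((x#b)!(i-p))) * of_nat ((x#b)!(i-p)) powi (- s i))"
        unfolding h_def by (subst prod.atLeast_Suc_atMost) (use p in auto)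
      also have "(\<Prod>i=Suc p..N. z i powi (- int ((x#b)!(i-p))) * of_nat ((x#b)!(i-p)) powi (- s i))
          = (\<Prod>i=p+1..N. z i powi (- int (b!(i-(p+1)))) * of_nat (b!(i-(p+1))) powi (- s i))"
      proof (rule prod.cong)
        fix i assume "i \<in> {p+1..N}"
        then have "i - p = Suc (i - (p+1))" by auto
        then show "z i powi (- int ((x#b)!(i-p))) * of_nat ((x#b)!(i-p)) powi (- s i)
           = z i powi (- int (b!(i-(p+1)))) * of_nat (b!(i-(p+1))) powi (- s i)" by simp
      qed simp
      finally show ?thesis .
    qed
    then show "(\<Sum>b\<in>Qidx (N-p) x. h (x # b)) = z p powi (- int x) * of_nat x powi (- s p) * Q N (p+1) s z x"
      unfolding Q_def by (simp add: sum_distrib_left)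
  qed
  finally show ?thesis .
qed

lemma infsum_diff':
  fixes f g :: "'a \<Rightarrow> complex"
  assumes "f summable_on A" "g summable_on A"
  shows "infsum (\<lambda>x. f x - g x) A = infsum f A - infsum g A"
proof -
  have "infsum (\<lambda>x. f x + (- g x)) A = infsum f A + infsum (\<lambda>x. - g x) A"
    by (rule infsum_add) (use assms summable_on_uminus in auto)
  then show ?thesis by (simp add: infsum_uminus)
qed

lemma summable_on_diff':
  fixes f g :: "'a \<Rightarrow> complex"
  assumes "f summable_on A" "g summable_on A"
  shows "(\<lambda>x. f x - g x) summable_on A"
  using summable_on_add[OF assms(1) summable_on_uminus[THEN iffD2, OF assms(2)]] by simp

lemma infsum_finite_sum:
  fixes f :: "'b \<Rightarrow> 'a \<Rightarrow> complex"
  assumes "finite K" "\<And>k. k \<in> K \<Longrightarrow> f k summable_on A"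
  shows "(\<lambda>a. \<Sum>k\<in>K. f k a) summable_on A \<and> infsum (\<lambda>a. \<Sum>k\<in>K. f k a) A = (\<Sum>k\<in>K. infsum (f k) A)"
  using assms
proof (induction K rule: finite_induct)
  case empty then show ?case by simp
next
  case (insert k K)
  then have IH: "(\<lambda>a. \<Sum>k\<in>K. f k a) summable_on A" "infsum (\<lambda>a. \<Sum>k\<in>K. f k a) A = (\<Sum>k\<in>K. infsum (f k) A)"
    by auto
  have fk: "f k summable_on A" using insert by auto
  show ?case using insert.hyps IH fk
    by (simp add: infsum_add summable_on_add)
qed

lemma La_B: "La N s (\<lambda>i. 1 / z i) = B N s (\<lambda>_. 0) (\<lambda>_. 0) z"
proof -
  have "Laidx N = Bidx N (\<lambda>_. 0)" by (auto simp: Laidx_def Bidx_alt)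
  then show ?thesis unfolding La_def B_def
    by (simp add: power_int_minus power_one_over divide_inverse mult.commute power_inverse)
qed

lemma partII:
  assumes N: "1 \<le> N" and z1: "norm (z 1) > 1" and zi: "\<forall>i. 1 \<le> i \<and> i \<le> N \<longrightarrow> norm (z i) \<ge> 1"
  shows "B N s (\<lambda>i. if i = 2 then j1 else 0) (\<lambda>i. if i = 1 then j1 else 0) z
         = z 1 ^ j1 * La N s (\<lambda>i. 1 / z i) - z 1 ^ j1 * Q N 1 s z j1"
proof -
  define G where "G x = z 1 powi (- int x) * of_nat x powi (- s 1) * Q N 2 s z x" for x
  have z0: "z 1 \<noteq> 0" using z1 by auto
  note D1 = B_decomp1[OF N _ _ z1 zi, of "\<lambda>i. if i = 2 then j1 else 0" "\<lambda>i. if i = 1 then j1 else 0" s]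
  note D0 = B_decomp1[OF N _ _ z1 zi, of "\<lambda>_. 0" "\<lambda>_. 0" s]
  have LaG: "La N s (\<lambda>i. 1 / z i) = infsum G {1..}" and Gs: "G summable_on {1..}"
    using D0 unfolding La_B G_def by simp_all
  have QG: "Q N 1 s z j1 = (\<Sum>x=1..j1. G x)"
    using Q_rec[of 1 N s z j1] N unfolding G_def by (simp add: numeral_2_eq_2)
  have un: "{1..} = {1..j1} \<union> {j1+1..}" by auto
  have "infsum G {1..} = infsum G {1..j1} + infsum G {j1+1..}"
    unfolding un
    by (rule infsum_Un_disjoint) (auto intro: summable_on_subset_banach[OF Gs])
  then have split: "infsum G {j1+1..} = La N s (\<lambda>i. 1 / z i) - Q N 1 s z j1"
    using LaG QG by simp
  have img: "{j1+1..} = (\<lambda>x. x + j1) ` {1..}"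
  proof
    show "{j1+1..} \<subseteq> (\<lambda>x. x + j1) ` {1..}"
    proof
      fix y :: nat assume "y \<in> {j1+1..}"
      then show "y \<in> (\<lambda>x. x + j1) ` {1..}" by (intro image_eqI[of _ _ "y - j1"]) auto
    qed
  qed auto
  have inj: "inj_on (\<lambda>x::nat. x + j1) {1..}" by (auto simp: inj_on_def)
  have sh: "z 1 ^ j1 * G (x + j1) = z 1 powi (- int x) * of_nat (x + j1) powi (- s 1) * Q N 2 s z (x + j1)" for x
  proof -
    have "z 1 ^ j1 * z 1 powi (- int (x + j1)) = z 1 powi (- int x)"
      using z0 by (simp add: power_int_add[symmetric] power_int_of_nat[symmetric] del: power_int_of_nat)
    then show ?thesis unfolding G_def by (simp add: mult.assoc[symmetric])
  qed
  have "B N s (\<lambda>i. if i = 2 then j1 else 0) (\<lambda>i. if i = 1 then j1 else 0) z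
      = infsum (\<lambda>x. z 1 ^ j1 * G (x + j1)) {1..}"
    using D1 unfolding sh by simp
  also have "\<dots> = z 1 ^ j1 * infsum (\<lambda>x. G (x + j1)) {1..}"
    by (rule infsum_cmult_right') 
  also have "infsum (\<lambda>x. G (x + j1)) {1..} = infsum G {j1+1..}"
    unfolding img infsum_reindex[OF inj] by (simp add: o_def)
  finally show ?thesis unfolding split by (simp add: right_diff_distrib)
qed

lemma Bidx_cong: "(\<And>i. i \<le> r \<Longrightarrow> M i = M' i) \<Longrightarrow> Bidx r M = Bidx r M'"
  unfolding Bidx_def by auto

lemma tm_cong: "(\<And>i. i \<le> r \<Longrightarrow> J i = J' i) \<Longrightarrow> tm r s J w = tm r s J' w"
  unfolding tm_def by (intro ext prod.cong) auto

lemma sum_shift_split: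
  fixes G :: "nat \<Rightarrow> complex"
  shows "(\<Sum>x=1..U. G (x + d)) = (\<Sum>x=1..d + U. G x) - (\<Sum>x=1..d. G x)"
proof -
  have "(\<Sum>x=1..d + U. G x) = (\<Sum>x=1..d. G x) + (\<Sum>x=d+1..d+U. G x)"
    by (rule sum.ub_add_nat) simp
  moreover have "(\<Sum>x=d+1..d+U. G x) = (\<Sum>x=1..U. G (x + d))"
    using sum.shift_bounds_cl_nat_ivl[of G 1 d U] by (simp add: add.commute)
  ultimately show ?thesis by simp
qed

lemma eps_diff:
  fixes G :: "nat \<Rightarrow> complex"
  shows "(\<Sum>x=1..c+b. G x) - (\<Sum>x=1..c+a. G x) = of_int (eps a b) * (\<Sum>k=min a b + 1..max a b. G (c + k))"
proof -
  have gen: "(\<Sum>x=1..c+(a+d). G x) - (\<Sum>x=1..c+a. G x) = (\<Sum>k=a + 1..a+d. G (c + k))" for a d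
  proof -
    have "(\<Sum>x=1..(c+a)+d. G x) = (\<Sum>x=1..c+a. G x) + (\<Sum>x=c+a+1..(c+a)+d. G x)"
      by (rule sum.ub_add_nat) simp
    moreover have "(\<Sum>x=(a+1)+c..(a+d)+c. G x) = (\<Sum>k=a+1..a+d. G (k + c))"
      by (rule sum.shift_bounds_cl_nat_ivl)
    ultimately show ?thesis by (simp add: add.commute add.left_commute)
  qed
  consider "a < b" | "a > b" | "a = b" by linarith
  then show ?thesis
  proof cases
    case 1
    then obtain d where "b = a + d" using less_imp_add_positive by blast
    then show ?thesis using gen[of a d] 1 by (simp add: eps_def)
  next
    case 2
    then obtain d where "a = b + d" using less_imp_add_positive by blast
    then show ?thesis using gen[of b d] 2 by (simp add: eps_def) (metis minus_diff_eq)
  next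
    case 3 then show ?thesis by (simp add: eps_def)
  qed
qed

lemma partI:
  assumes p: "2 \<le> p" "p \<le> N" and z1: "norm (z 1) > 1" and zi: "\<forall>i. 1 \<le> i \<and> i \<le> N \<longrightarrow> norm (z i) \<ge> 1"
  shows "B N s (\<lambda>i. if i \<le> p then m i else if i = p + 1 then j p else 0)
                 (\<lambda>i. if i \<le> p then j i else 0) z
         = z p ^ (j p) * B N s (\<lambda>i. if i \<le> p - 1 then m i else if i = p then j (p - 1) else 0)
                              (\<lambda>i. if i \<le> p - 1 then j i else 0) z
           - z p ^ (j p) * Q N p s z (j p) * B (p - 1) s m j z
           + of_int (eps (j (p - 1)) (j p + m p)) *
             (\<Sum>k = min (j (p - 1)) (j p + m p) + 1 .. max (j (p - 1)) (j p + m p).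
                z p powi (int (j p) - int k) * R N p s m j z k)"
proof -
  define M1 where "M1 = (\<lambda>i. if i \<le> p then m i else if i = p + 1 then j p else 0)"
  define J1 where "J1 = (\<lambda>i. if i \<le> p then j i else 0)"
  define M2 where "M2 = (\<lambda>i. if i \<le> p - 1 then m i else if i = p then j (p - 1) else 0)"
  define J2 where "J2 = (\<lambda>i. if i \<le> p - 1 then j i else 0)"
  define M3 where "M3 k = (\<lambda>i. if i \<le> p - 1 then m i else if i = p then k else 0)" for k
  define P where "P = Bidx (p-1) m"
  define pre where "pre = tm (p-1) s j z"
  define c where "c a = a!(p-2)" for a :: "nat list"
  define G where "G n = z p powi (- int n) * of_nat n powi (- s p) * Q N (p+1) s z n" for n
  define F where "F U = (\<Sum>x=1..U. G x)" for U
  define Vt where "Vt = j (p-1)"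
  define Tt where "Tt = j p + m p"
  define K where "K = {min Vt Tt + 1..max Vt Tt}"
  define e where "e = (of_int (eps Vt Tt) :: complex)"
  define zj where "zj = z p ^ j p"
  have zp0: "z p \<noteq> 0" using zi p by (metis norm_zero not_one_le_zero le_trans one_le_numeral)
  have p1: "1 \<le> p" using p by simp
  have eB1: "Bidx (p-1) M1 = P" unfolding P_def M1_def by (rule Bidx_cong) auto
  have eB2: "Bidx (p-1) M2 = P" unfolding P_def M2_def by (rule Bidx_cong) auto
  have eB3: "Bidx (p-1) (M3 k) = P" for k unfolding P_def M3_def by (rule Bidx_cong) auto
  have eT1: "tm (p-1) s J1 z = pre" unfolding pre_def J1_def by (rule tm_cong) auto
  have eT2: "tm (p-1) s J2 z = pre" unfolding pre_def J2_def by (rule tm_cong) auto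
  have M10: "\<forall>i>p+1. M1 i = 0" and J10: "\<forall>i>p. J1 i = 0" unfolding M1_def J1_def by auto
  have M20: "\<forall>i>p+1. M2 i = 0" and J20: "\<forall>i>p. J2 i = 0" unfolding M2_def J2_def by auto
  have M30: "\<forall>i>p+1. M3 k i = 0" for k unfolding M3_def by auto
  have v1: "M1 p = m p" "J1 p = j p" "M1 (p+1) = j p" unfolding M1_def J1_def by auto
  have v2: "M2 p = Vt" "J2 p = 0" "M2 (p+1) = 0" unfolding M2_def J2_def Vt_def using p by auto
  have v3: "M3 k p = k" "M3 k (p+1) = 0" for k unfolding M3_def using p by auto
  note D1 = B_decomp2[OF p M10 J10 z1 zi, of s]
  note D2 = B_decomp2[OF p M20 J20 z1 zi, of s]
  note D3 = B_decomp2[OF p M30 J20 z1 zi, of s]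
  have D1': "B N s M1 J1 z = infsum (\<lambda>a. pre a * (\<Sum>x=1..c a + m p. z p powi (- int x) * of_nat (x + j p) powi (- s p) * Q N (p+1) s z (x + j p))) P"
    using D1(2) unfolding eB1 eT1 v1 c_def .
  have D2s: "(\<lambda>a. pre a * F (c a + Vt)) summable_on P"
    using D2(1) unfolding eB2 eT2 v2 c_def F_def G_def by simp
  have D2': "B N s M2 J2 z = infsum (\<lambda>a. pre a * F (c a + Vt)) P"
    using D2(2) unfolding eB2 eT2 v2 c_def F_def G_def by simp
  have D3s: "(\<lambda>a. pre a * F (c a + k)) summable_on P" for k
    using D3(1)[of k] unfolding eB3 eT2 v3 v2 c_def F_def G_def by simp
  have pres: "pre summable_on P"
    unfolding pre_def P_def by (rule tm_summable) (use p z1 zi in auto)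
  have Bp: "B (p-1) s m j z = infsum pre P" unfolding B_tm pre_def P_def ..
  have Qp: "Q N p s z (j p) = F (j p)" unfolding F_def G_def by (rule Q_rec[OF p1 p(2)])
  have Gs: "(\<lambda>a. pre a * G (c a + k)) summable_on P" if "1 \<le> k" for k
  proof -
    have "pre a * G (c a + k) = pre a * F (c a + k) - pre a * F (c a + (k - 1))" for a
    proof -
      define n where "n = c a + (k-1)"
      have nn: "c a + k = Suc n" using that unfolding n_def by simp
      have "F (Suc n) = F n + G (Suc n)" unfolding F_def by (simp add: sum.cl_ivl_Suc)
      then have "F (c a + k) = F (c a + (k-1)) + G (c a + k)" unfolding nn n_def[symmetric] .
      then show ?thesis by (simp add: algebra_simps)
    qed
    then show ?thesis using summable_on_diff'[OF D3s[of k] D3s[of "k-1"]] by simp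
  qed
  have Rk: "R N p s m j z k = z p powi int k * infsum (\<lambda>a. pre a * G (c a + k)) P" for k
  proof -
    have pt: "(\<Prod>i=1..p-2. z i powi (- int (a!(i-1))))
      * (z (p-1) * z p) powi (- int (a!(p-2)))
      * (\<Prod>i=1..p-1. of_nat (a!(i-1) + j i) powi (- s i))
      * of_nat (a!(p-2) + k) powi (- s p)
      * Q N (p+1) s z (a!(p-2) + k) = z p powi int k * (pre a * G (c a + k))" for a
    proof -
      have pm: "p - 1 = Suc (p-2)" using p by simp
      have "pre a = (\<Prod>i=1..p-1. z i powi (- int (a!(i-1)))) * (\<Prod>i=1..p-1. of_nat (a!(i-1) + j i) powi (- s i))"
        unfolding pre_def tm_def by (simp add: prod.distrib)
      also have "(\<Prod>i=1..p-1. z i powi (- int (a!(i-1)))) = (\<Prod>i=1..p-2. z i powi (- int (a!(i-1)))) * z (p-1) powi (- int (a!(p-2)))"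
        unfolding pm by (simp add: prod.cl_ivl_Suc)
      finally have preq: "pre a = (\<Prod>i=1..p-2. z i powi (- int (a!(i-1)))) * z (p-1) powi (- int (a!(p-2))) * (\<Prod>i=1..p-1. of_nat (a!(i-1) + j i) powi (- s i))" .
      have zz: "z p powi (- int (a!(p-2))) = z p powi int k * z p powi (- int (a!(p-2) + k))"
      proof -
        have "z p powi (int k + (- int (a!(p-2) + k))) = z p powi int k * z p powi (- int (a!(p-2) + k))"
          using zp0 by (intro power_int_add) simp
        moreover have "int k + (- int (a!(p-2) + k)) = - int (a!(p-2))" by simp
        ultimately show ?thesis by simp
      qed
      show ?thesis unfolding preq G_def c_def power_int_mult_distrib zz
        by (simp add: algebra_simps)
    qed
    have "R N p s m j z k = infsum (\<lambda>a. z p powi int k * (pre a * G (c a + k))) P"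
      unfolding R_def P_def[symmetric] pt ..
    also have "\<dots> = z p powi int k * infsum (\<lambda>a. pre a * G (c a + k)) P"
      by (rule infsum_cmult_right')
    finally show ?thesis .
  qed
  have S1: "(\<Sum>x=1..c a + m p. z p powi (- int x) * of_nat (x + j p) powi (- s p) * Q N (p+1) s z (x + j p))
      = zj * (F (c a + Tt) - F (j p))" for a
  proof -
    have t: "z p powi (- int x) * of_nat (x + j p) powi (- s p) * Q N (p+1) s z (x + j p) = zj * G (x + j p)" for x
    proof -
      have "zj * z p powi (- int (x + j p)) = z p powi (- int x)"
        unfolding zj_def using zp0 by (simp add: power_int_add[symmetric] power_int_of_nat[symmetric] del: power_int_of_nat)
      then show ?thesis unfolding G_def by (simp add: mult.assoc[symmetric])
    qed
    have e: "j p + (c a + m p) = c a + Tt" unfolding Tt_def by simp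
    show ?thesis unfolding t sum_distrib_left[symmetric] sum_shift_split F_def e ..
  qed
  have ptw: "pre a * (\<Sum>x=1..c a + m p. z p powi (- int x) * of_nat (x + j p) powi (- s p) * Q N (p+1) s z (x + j p))
     = (zj * (pre a * F (c a + Vt)) - zj * F (j p) * pre a) + e * (\<Sum>k\<in>K. zj * (pre a * G (c a + k)))" for a
  proof -
    have "F (c a + Tt) - F (c a + Vt) = e * (\<Sum>k\<in>K. G (c a + k))"
      unfolding F_def e_def K_def by (rule eps_diff)
    then have "F (c a + Tt) = F (c a + Vt) + e * (\<Sum>k\<in>K. G (c a + k))" by (simp add: algebra_simps)
    then show ?thesis unfolding S1 by (simp add: algebra_simps sum_distrib_left)
  qed
  have Kfin: "finite K" unfolding K_def by simp
  have K1: "k \<in> K \<Longrightarrow> 1 \<le> k" for k unfolding K_def by simp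
  have As: "(\<lambda>a. zj * (pre a * F (c a + Vt))) summable_on P" by (rule summable_on_cmult_right[OF D2s])
  have Bs: "(\<lambda>a. zj * F (j p) * pre a) summable_on P" by (rule summable_on_cmult_right[OF pres])
  have CC: "(\<lambda>a. \<Sum>k\<in>K. zj * (pre a * G (c a + k))) summable_on P \<and>
     infsum (\<lambda>a. \<Sum>k\<in>K. zj * (pre a * G (c a + k))) P = (\<Sum>k\<in>K. infsum (\<lambda>a. zj * (pre a * G (c a + k))) P)"
    by (rule infsum_finite_sum[OF Kfin]) (rule summable_on_cmult_right, rule Gs, erule K1)
  have Cs: "(\<lambda>a. e * (\<Sum>k\<in>K. zj * (pre a * G (c a + k)))) summable_on P"
    by (rule summable_on_cmult_right) (use CC in blast)
  have "B N s M1 J1 z = infsum (\<lambda>a. (zj * (pre a * F (c a + Vt)) - zj * F (j p) * pre a) + e * (\<Sum>k\<in>K. zj * (pre a * G (c a + k)))) P"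
    unfolding D1' ptw ..
  also have "\<dots> = (infsum (\<lambda>a. zj * (pre a * F (c a + Vt))) P - infsum (\<lambda>a. zj * F (j p) * pre a) P)
       + infsum (\<lambda>a. e * (\<Sum>k\<in>K. zj * (pre a * G (c a + k)))) P"
    by (simp add: infsum_add[OF summable_on_diff'[OF As Bs] Cs] infsum_diff'[OF As Bs])
  also have "infsum (\<lambda>a. zj * (pre a * F (c a + Vt))) P = zj * B N s M2 J2 z"
    unfolding D2' by (rule infsum_cmult_right')
  also have "infsum (\<lambda>a. zj * F (j p) * pre a) P = zj * Q N p s z (j p) * B (p - 1) s m j z"
    unfolding Bp Qp by (rule infsum_cmult_right')
  also have "infsum (\<lambda>a. e * (\<Sum>k\<in>K. zj * (pre a * G (c a + k)))) P
      = e * (\<Sum>k\<in>K. z p powi (int (j p) - int k) * R N p s m j z k)"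
  proof -
    have "infsum (\<lambda>a. e * (\<Sum>k\<in>K. zj * (pre a * G (c a + k)))) P = e * infsum (\<lambda>a. \<Sum>k\<in>K. zj * (pre a * G (c a + k))) P"
      by (rule infsum_cmult_right')
    also have "\<dots> = e * (\<Sum>k\<in>K. infsum (\<lambda>a. zj * (pre a * G (c a + k))) P)"
      using CC by simp
    also have "\<dots> = e * (\<Sum>k\<in>K. z p powi (int (j p) - int k) * R N p s m j z k)"
    proof -
      have "infsum (\<lambda>a. zj * (pre a * G (c a + k))) P = z p powi (int (j p) - int k) * R N p s m j z k" for k
      proof -
        have "z p powi (int (j p) - int k) * z p powi int k = zj"
        proof -
          have "z p powi ((int (j p) - int k) + int k) = z p powi (int (j p) - int k) * z p powi int k"
            using zp0 by (intro power_int_add) simp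
          then show ?thesis unfolding zj_def by simp
        qed
        then show ?thesis unfolding Rk infsum_cmult_right' by (simp add: mult.assoc[symmetric])
      qed
      then show ?thesis by simp
    qed
    finally show ?thesis .
  qed
  finally show ?thesis unfolding M1_def J1_def M2_def J2_def zj_def e_def K_def Vt_def Tt_def .
qed


theorem mainTheorem6:
  fixes N :: nat and s :: "nat \<Rightarrow> int" and z :: "nat \<Rightarrow> complex"
  assumes "N \<ge> 1" and "norm (z 1) > 1" and "\<forall>i. 1 \<le> i \<and> i \<le> N \<longrightarrow> norm (z i) \<ge> 1"
  shows "(\<forall>p (m :: nat \<Rightarrow> nat) (j :: nat \<Rightarrow> nat). 2 \<le> p \<and> p \<le> N \<and> m 1 = 0 \<longrightarrow>
           B N s (\<lambda>i. if i \<le> p then m i else if i = p + 1 then j p else 0)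
                 (\<lambda>i. if i \<le> p then j i else 0) z
         = z p ^ (j p) * B N s (\<lambda>i. if i \<le> p - 1 then m i else if i = p then j (p - 1) else 0)
                              (\<lambda>i. if i \<le> p - 1 then j i else 0) z
           - z p ^ (j p) * Q N p s z (j p) * B (p - 1) s m j z
           + of_int (eps (j (p - 1)) (j p + m p)) *
             (\<Sum>k = min (j (p - 1)) (j p + m p) + 1 .. max (j (p - 1)) (j p + m p).
                z p powi (int (j p) - int k) * R N p s m j z k))
       \<and> (\<forall>j1 :: nat.
           B N s (\<lambda>i. if i = 2 then j1 else 0) (\<lambda>i. if i = 1 then j1 else 0) z
         = z 1 ^ j1 * La N s (\<lambda>i. 1 / z i) - z 1 ^ j1 * Q N 1 s z j1)"
proof (intro conjI allI impI)
  fix p m j assume "2 \<le> p \<and> p \<le> N \<and> (m :: nat \<Rightarrow> nat) 1 = 0"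
  then show "B N s (\<lambda>i. if i \<le> p then m i else if i = p + 1 then j p else 0)
                 (\<lambda>i. if i \<le> p then j i else 0) z
         = z p ^ (j p) * B N s (\<lambda>i. if i \<le> p - 1 then m i else if i = p then j (p - 1) else 0)
                              (\<lambda>i. if i \<le> p - 1 then j i else 0) z
           - z p ^ (j p) * Q N p s z (j p) * B (p - 1) s m j z
           + of_int (eps (j (p - 1)) (j p + m p)) *
             (\<Sum>k = min (j (p - 1)) (j p + m p) + 1 .. max (j (p - 1)) (j p + m p).
                z p powi (int (j p) - int k) * R N p s m j z k)"
    using partI[of p N z s m j] assms by blast
next
  fix j1 :: nat
  show "B N s (\<lambda>i. if i = 2 then j1 else 0) (\<lambda>i. if i = 1 then j1 else 0) z
         = z 1 ^ j1 * La N s (\<lambda>i. 1 / z i) - z 1 ^ j1 * Q N 1 s z j1"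
    by (rule partII[OF assms])
qed

end
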